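(* Let $n,q$ be positive integers and $f_{n,q}:\mathbb{C}^3\to\mathbb{C}$, $f_{n,q}(x,y,z)=x-3x^{2n+1}y^{2q}+2x^{3n+1}y^{3q}+yz$. Then $f_{n,q}$ satisfies Malgrange's condition for every $t_0\in\mathbb{C}$ if and only if $n\le q$.
   Context: For a polynomial $g:\mathbb{C}^m\to\mathbb{C}$, let $\operatorname{grad} g(x)=\left(\overline{\frac{\partial g}{\partial x_1}(x)},\dots,\overline{\frac{\partial g}{\partial x_m}(x)}\right)$. The polynomial $g$ satisfies Malgrange's condition for $t_0\in\mathbb{C}$ if there is no sequence $(z^k)\subseteq\mathbb{C}^m$ with $\|z^k\|\to\infty$, $g(z^k)\to t_0$ and $\|z^k\|\cdot\|\operatorname{grad} g(z^k)\|\to 0$ (equivalently: there exist $R>0$, $\eta>0$, $\delta>0$ such that $\|x\|\cdot\|\operatorname{grad} g(x)\|\ge\delta$ whenever $\|x\|\ge R$ and $|g(x)-t_0|<\eta$). *)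

theory Defs
  imports "HOL-Analysis.Analysis"
begin

definition cgrad :: "(complex^'m \<Rightarrow> complex) \<Rightarrow> complex^'m \<Rightarrow> complex^'m" where
  "cgrad g x = (\<chi> i. cnj (deriv (\<lambda>t. g (x + t *s axis i 1)) 0))"

definition malgrange_condition :: "(complex^'m \<Rightarrow> complex) \<Rightarrow> complex \<Rightarrow> bool" where
  "malgrange_condition g t0 \<longleftrightarrow>
     \<not> (\<exists>z :: nat \<Rightarrow> complex^'m.
          filterlim (\<lambda>k. norm (z k)) at_top sequentially \<and>
          (\<lambda>k. g (z k)) \<longlonglongrightarrow> t0 \<and>
          (\<lambda>k. norm (z k) * norm (cgrad g (z k))) \<longlonglongrightarrow> 0)"

definition f_nq :: "nat \<Rightarrow> nat \<Rightarrow> complex^3 \<Rightarrow> complex" where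
  "f_nq n q v = (let x = v $ 1; y = v $ 2; z = v $ 3 in
     x - 3 * x ^ (2*n+1) * y ^ (2*q) + 2 * x ^ (3*n+1) * y ^ (3*q) + y * z)"

end

theory Submission
  imports Defs
begin

lemma comp_axis[simp]: fixes v :: "complex^'n" shows "(v + t *s axis i 1) $ j = v $ j + (if j = i then t else 0)"
  by (simp add: axis_def)

lemma grad1: "cgrad (f_nq n q) v $ 1 = cnj (1 - 3 * of_nat (2*n+1) * (v$1) ^ (2*n) * (v$2) ^ (2*q)
      + 2 * of_nat (3*n+1) * (v$1) ^ (3*n) * (v$2) ^ (3*q))"
proof -
  have "((\<lambda>t. f_nq n q (v + t *s axis 1 1)) has_field_derivative
     (1 - 3 * of_nat (2*n+1) * (v$1) ^ (2*n) * (v$2) ^ (2*q)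
      + 2 * of_nat (3*n+1) * (v$1) ^ (3*n) * (v$2) ^ (3*q))) (at 0)"
    unfolding f_nq_def Let_def comp_axis
    apply (auto intro!: derivative_eq_intros)
    apply (cases n)
     apply (simp_all add: algebra_simps power_add power3_eq_cube)
    done
  then show ?thesis unfolding cgrad_def by (simp add: DERIV_imp_deriv)
qed

lemma grad2: "cgrad (f_nq n q) v $ 2 = cnj (- 3 * of_nat (2*q) * (v$1) ^ (2*n+1) * (v$2) ^ (2*q - 1)
      + 2 * of_nat (3*q) * (v$1) ^ (3*n+1) * (v$2) ^ (3*q - 1) + v$3)"
proof -
  have "((\<lambda>t. f_nq n q (v + t *s axis 2 1)) has_field_derivative
     (- 3 * of_nat (2*q) * (v$1) ^ (2*n+1) * (v$2) ^ (2*q - 1)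
      + 2 * of_nat (3*q) * (v$1) ^ (3*n+1) * (v$2) ^ (3*q - 1) + v$3)) (at 0)"
    unfolding f_nq_def Let_def comp_axis
    by (auto intro!: derivative_eq_intros)
  then show ?thesis unfolding cgrad_def by (simp add: DERIV_imp_deriv)
qed

lemma grad3: "cgrad (f_nq n q) v $ 3 = cnj (v$2)"
proof -
  have "((\<lambda>t. f_nq n q (v + t *s axis 3 1)) has_field_derivative (v$2)) (at 0)"
    unfolding f_nq_def Let_def comp_axis
    by (auto intro!: derivative_eq_intros)
  then show ?thesis unfolding cgrad_def by (simp add: DERIV_imp_deriv)
qed

lemma norm3: "norm (w::complex^3) \<le> norm (w$1) + norm (w$2) + norm (w$3)"
  unfolding norm_vec_def by (rule order_trans[OF L2_set_le_sum]) (auto simp: sum_3)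
lemma dir1:
  fixes n q :: nat
  assumes "n > 0" and "n \<le> q"
  shows "malgrange_condition (f_nq n q) t0"
  unfolding malgrange_condition_def
proof
  assume "\<exists>z :: nat \<Rightarrow> complex^3.
          filterlim (\<lambda>k. norm (z k)) at_top sequentially \<and>
          (\<lambda>k. f_nq n q (z k)) \<longlonglongrightarrow> t0 \<and>
          (\<lambda>k. norm (z k) * norm (cgrad (f_nq n q) (z k))) \<longlonglongrightarrow> 0"
  then obtain z :: "nat \<Rightarrow> complex^3" where
    hN: "filterlim (\<lambda>k. norm (z k)) at_top sequentially" and
    hNG: "(\<lambda>k. norm (z k) * norm (cgrad (f_nq n q) (z k))) \<longlonglongrightarrow> 0" by blast
  define G where "G k = norm (cgrad (f_nq n q) (z k))" for k
  define X where "X k = z k $ 1" for k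
  define Y where "Y k = z k $ 2" for k
  have ev1: "eventually (\<lambda>k. 1 \<le> norm (z k)) sequentially"
    using hN unfolding filterlim_at_top by blast
  have G0: "G k \<ge> 0" for k unfolding G_def by simp
  have hG: "G \<longlonglongrightarrow> 0"
  proof (rule Lim_null_comparison[OF _ hNG])
    show "\<forall>\<^sub>F k in sequentially. norm (G k) \<le> norm (z k) * norm (cgrad (f_nq n q) (z k))"
      using ev1 proof eventually_elim
      case (elim k)
      then show ?case using G0[of k] mult_right_mono[OF elim G0[of k]] by (simp add: G_def)
    qed
  qed
  have Yle: "norm (Y k) \<le> G k" for k
    using Finite_Cartesian_Product.norm_nth_le[of "cgrad (f_nq n q) (z k)" 3] by (simp add: G_def Y_def grad3)
  have Xle: "norm (X k) \<le> norm (z k)" for k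
    using Finite_Cartesian_Product.norm_nth_le[of "z k" 1] by (simp add: X_def)
  have hXY: "(\<lambda>k. X k * Y k) \<longlonglongrightarrow> 0"
  proof (rule Lim_null_comparison[OF _ hNG])
    show "\<forall>\<^sub>F k in sequentially. norm (X k * Y k) \<le> norm (z k) * norm (cgrad (f_nq n q) (z k))"
      by (intro always_eventually allI) (simp add: norm_mult mult_mono Xle Yle G_def[symmetric])
  qed
  have hY: "Y \<longlonglongrightarrow> 0"
    by (rule Lim_null_comparison[OF _ hG]) (simp add: Yle)
  define u where "u k = (X k * Y k) ^ n * Y k ^ (q - n)" for k
  have hu: "u \<longlonglongrightarrow> 0"
  proof -
    have "u \<longlonglongrightarrow> 0 ^ n * 0 ^ (q - n)"
      unfolding u_def by (intro tendsto_intros hXY hY)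
    then show ?thesis using assms(1) by (simp add: zero_power)
  qed
  have ueq: "X k ^ n * Y k ^ q = u k" for k
  proof -
    have "q = n + (q - n)" using assms(2) by simp
    then have "Y k ^ q = Y k ^ n * Y k ^ (q - n)" by (metis power_add)
    then show ?thesis unfolding u_def by (simp add: power_mult_distrib)
  qed
  define fx where "fx k = 1 - 3 * of_nat (2*n+1) * (X k) ^ (2*n) * (Y k) ^ (2*q)
      + 2 * of_nat (3*n+1) * (X k) ^ (3*n) * (Y k) ^ (3*q)" for k
  have fxeq: "fx k = 1 - 3 * of_nat (2*n+1) * (u k)^2 + 2 * of_nat (3*n+1) * (u k)^3" for k
  proof -
    have "X k ^ (2*n) * Y k ^ (2*q) = (u k)^2" "X k ^ (3*n) * Y k ^ (3*q) = (u k)^3"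
      unfolding ueq[symmetric] by (simp_all add: power_mult_distrib mult.commute flip: power_mult)
    then show ?thesis unfolding fx_def by (simp add: mult.assoc)
  qed
  have f1: "fx \<longlonglongrightarrow> 1"
  proof -
    have "fx \<longlonglongrightarrow> 1 - 3 * of_nat (2*n+1) * 0^2 + 2 * of_nat (3*n+1) * 0^3"
      unfolding fxeq by (intro tendsto_intros hu)
    then show ?thesis by simp
  qed
  have f0: "fx \<longlonglongrightarrow> 0"
  proof (rule Lim_null_comparison[OF _ hG])
    show "\<forall>\<^sub>F k in sequentially. norm (fx k) \<le> G k"
    proof (intro always_eventually allI)
      fix k
      have "norm (fx k) = norm (cgrad (f_nq n q) (z k) $ 1)"
        by (simp only: grad1 complex_mod_cnj fx_def X_def Y_def)
      also have "\<dots> \<le> G k" unfolding G_def by (rule Finite_Cartesian_Product.norm_nth_le)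
      finally show "norm (fx k) \<le> G k" .
    qed
  qed
  from LIMSEQ_unique[OF f1 f0] show False by simp
qed

lemma pw_aux:
  fixes x y :: complex
  assumes "x ^ n * y ^ q = 1"
  shows "x ^ (2*n+1) * y ^ (2*q) = x" "x ^ (3*n+1) * y ^ (3*q) = x"
proof -
  have "x ^ (2*n+1) * y ^ (2*q) = x * (x ^ n * y ^ q)^2"
    by (simp add: power_mult_distrib power_add mult.commute mult.left_commute flip: power_mult)
  then show "x ^ (2*n+1) * y ^ (2*q) = x" using assms by simp
  have "x ^ (3*n+1) * y ^ (3*q) = x * (x ^ n * y ^ q)^3"
    by (simp add: power_mult_distrib power_add mult.commute mult.left_commute flip: power_mult)
  then show "x ^ (3*n+1) * y ^ (3*q) = x" using assms by simp
qed

lemma dir2: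
  fixes n q :: nat
  assumes "q > 0" and "q < n"
  shows "\<not> malgrange_condition (f_nq n q) 0"
proof -
  define a where "a k = real (Suc k)" for k
  define z :: "nat \<Rightarrow> complex^3" where
    "z k = vector [of_real (a k ^ q), of_real (1 / a k ^ n), 0]" for k
  have apos: "a k \<ge> 1" for k unfolding a_def by simp
  have z1: "z k $ 1 = of_real (a k ^ q)" and z2: "z k $ 2 = of_real (1 / a k ^ n)"
    and z3: "z k $ 3 = 0" for k unfolding z_def by simp_all
  have u1: "(z k $ 1) ^ n * (z k $ 2) ^ q = 1" for k
  proof -
    have "(a k ^ q) ^ n * (1 / a k ^ n) ^ q = 1"
      using apos[of k] by (simp add: power_one_over mult.commute flip: power_mult)
    then have "of_real ((a k ^ q) ^ n * (1 / a k ^ n) ^ q) = (1::complex)" by simp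
    then show ?thesis unfolding z1 z2 by (simp only: of_real_mult of_real_power)
  qed
  have y0: "z k $ 2 \<noteq> 0" for k unfolding z2 using apos[of k] by simp
  have fz: "f_nq n q (z k) = 0" for k
    unfolding f_nq_def Let_def z3
    by (simp only: mult.assoc pw_aux[OF u1[of k]] mult_zero_right) simp
  have g1: "cgrad (f_nq n q) (z k) $ 1 = 0" for k
  proof -
    have "(z k $ 1) ^ (2*n) * (z k $ 2) ^ (2*q) = ((z k $ 1) ^ n * (z k $ 2) ^ q)^2"
      "(z k $ 1) ^ (3*n) * (z k $ 2) ^ (3*q) = ((z k $ 1) ^ n * (z k $ 2) ^ q)^3"
      by (simp_all add: power_mult_distrib mult.commute flip: power_mult)
    then have "(z k $ 1) ^ (2*n) * (z k $ 2) ^ (2*q) = 1" "(z k $ 1) ^ (3*n) * (z k $ 2) ^ (3*q) = 1"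
      using u1[of k] by simp_all
    then show ?thesis unfolding grad1 by (simp add: mult.assoc algebra_simps)
  qed
  have g2: "cgrad (f_nq n q) (z k) $ 2 = 0" for k
  proof -
    let ?x = "z k $ 1" and ?y = "z k $ 2"
    have "?y ^ (2*q - 1) = ?y ^ (2*q) / ?y" "?y ^ (3*q - 1) = ?y ^ (3*q) / ?y"
      using y0[of k] assms(1) by (simp_all add: power_diff)
    then have e2: "?x ^ (2*n+1) * ?y ^ (2*q - 1) = ?x / ?y"
      and e3: "?x ^ (3*n+1) * ?y ^ (3*q - 1) = ?x / ?y"
      using pw_aux[OF u1[of k]] by (simp_all add: times_divide_eq_right)
    show ?thesis unfolding grad2 z3
      by (simp only: mult.assoc e2 e3) (simp add: algebra_simps)
  qed
  have normg: "norm (cgrad (f_nq n q) (z k)) \<le> 1 / a k ^ n" for k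
    using norm3[of "cgrad (f_nq n q) (z k)"] apos[of k] by (simp add: g1 g2 grad3 z2 norm_divide norm_power)
  have normz: "norm (z k) \<le> 2 * a k ^ q" for k
  proof -
    have "1 / a k ^ n \<le> 1" using apos[of k] by simp
    moreover have "1 \<le> a k ^ q" using apos[of k] by simp
    moreover have "norm (z k) \<le> a k ^ q + 1 / a k ^ n"
      using norm3[of "z k"] apos[of k] by (simp add: z1 z2 z3 norm_divide norm_power)
    ultimately show ?thesis by linarith
  qed
  have normz2: "real k \<le> norm (z k)" for k
  proof -
    have "real k \<le> a k" unfolding a_def by simp
    also have "a k \<le> a k ^ q" using apos[of k] assms(1) by (simp add: self_le_power)
    also have "\<dots> = norm (z k $ 1)" using apos[of k] by (simp add: z1 norm_power)
    also have "\<dots> \<le> norm (z k)" by (rule Finite_Cartesian_Product.norm_nth_le)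
    finally show ?thesis .
  qed
  have hN: "filterlim (\<lambda>k. norm (z k)) at_top sequentially"
    by (rule filterlim_at_top_mono[OF filterlim_real_sequentially]) (simp add: normz2)
  have prod: "norm (z k) * norm (cgrad (f_nq n q) (z k)) \<le> 2 * inverse (real (Suc k))" for k
  proof -
    have "norm (z k) * norm (cgrad (f_nq n q) (z k)) \<le> 2 * a k ^ q * (1 / a k ^ n)"
      by (rule mult_mono[OF normz normg]) (use apos[of k] in auto)
    also have "\<dots> \<le> 2 * inverse (a k)"
    proof -
      have "a k ^ (q + 1) \<le> a k ^ n" using apos[of k] assms(2) by (intro power_increasing) auto
      then have "a k ^ q * a k \<le> a k ^ n" by (simp add: mult.commute)
      then show ?thesis using apos[of k]
        by (simp add: field_simps)
    qed
    finally show ?thesis unfolding a_def .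
  qed
  have hP: "(\<lambda>k. norm (z k) * norm (cgrad (f_nq n q) (z k))) \<longlonglongrightarrow> 0"
  proof (rule Lim_null_comparison)
    show "(\<lambda>k. 2 * inverse (real (Suc k))) \<longlonglongrightarrow> 0"
      using tendsto_mult_right_zero[OF LIMSEQ_inverse_real_of_nat, of 2] by simp
    show "\<forall>\<^sub>F k in sequentially. norm (norm (z k) * norm (cgrad (f_nq n q) (z k))) \<le> 2 * inverse (real (Suc k))"
      using prod by (intro always_eventually allI) simp
  qed
  show ?thesis unfolding malgrange_condition_def
  proof (simp only: not_not, intro exI conjI)
    show "(\<lambda>k. f_nq n q (z k)) \<longlonglongrightarrow> 0" by (simp add: fz)
  qed (fact hN, fact hP)
qed

theorem proposition1p8:
  fixes n q :: nat
  assumes "n > 0" and "q > 0"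
  shows "(\<forall>t0. malgrange_condition (f_nq n q) t0) \<longleftrightarrow> n \<le> q"
proof
  assume h: "\<forall>t0. malgrange_condition (f_nq n q) t0"
  show "n \<le> q"
  proof (rule ccontr)
    assume "\<not> n \<le> q"
    then have "q < n" by simp
    with dir2[OF assms(2)] h show False by blast
  qed
next
  assume "n \<le> q"
  then show "\<forall>t0. malgrange_condition (f_nq n q) t0" using dir1[OF assms(1)] by blast
qed

end
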